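(* The pencils in $\mathcal G$ are exactly those subsets of $\mathcal G$ with more than one element that are intersections of two distinct maximal adjacency cliques of $\mathcal G$.
   Context: $K$ is a (not necessarily commutative) field and $V$ is a left vector space over $K$ of arbitrary (possibly infinite) dimension with $\dim V>2$. $\mathcal G:=\{X\le V\mid X\cong V/X\}$, assumed nonempty. Two elements $X,Y\in\mathcal G$ are adjacent if $\dim((X+Y)/X)=\dim((X+Y)/Y)=1$. A maximal adjacency clique is a subset of $\mathcal G$ of mutually adjacent elements which is maximal with respect to inclusion among such subsets. A pencil is a set $\mathcal G[M,N]:=\{X\in\mathcal G\mid M<X<N\}$ (strict inclusions), where $M,N\le V$ are subspaces such that there exists $X\in\mathcal G$ with $M\le X\le N$ and $\dim(X/M)=\dim(N/X)=1$. *)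

theory Defs
  imports Main
begin

text \<open>Left vector space over a (not necessarily commutative) field, i.e. a division ring.
  The vector space V is the whole carrier type 'v; scalar multiplication is sm.\<close>

definition left_vs :: "('k::division_ring \<Rightarrow> 'v::ab_group_add \<Rightarrow> 'v) \<Rightarrow> bool" where
  "left_vs sm \<longleftrightarrow>
     (\<forall>c v w. sm c (v + w) = sm c v + sm c w) \<and>
     (\<forall>c d v. sm (c + d) v = sm c v + sm d v) \<and>
     (\<forall>c d v. sm (c * d) v = sm c (sm d v)) \<and>
     (\<forall>v. sm 1 v = v)"

definition subspace :: "('k::division_ring \<Rightarrow> 'v::ab_group_add \<Rightarrow> 'v) \<Rightarrow> 'v set \<Rightarrow> bool" where
  "subspace sm X \<longleftrightarrow> 0 \<in> X \<and> (\<forall>x\<in>X. \<forall>y\<in>X. x + y \<in> X) \<and> (\<forall>c. \<forall>x\<in>X. sm c x \<in> X)"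

definition ssum :: "'v::ab_group_add set \<Rightarrow> 'v set \<Rightarrow> 'v set" where
  "ssum X Y = {x + y | x y. x \<in> X \<and> y \<in> Y}"

definition coset :: "'v::ab_group_add set \<Rightarrow> 'v \<Rightarrow> 'v set" where
  "coset X v = {v + x | x. x \<in> X}"

text \<open>X is isomorphic (as a left K-space) to the quotient V/X: there is a bijective linear
  map from X onto the set of cosets of X, with the quotient operations
  (v+X)+(w+X) = (v+w)+X and c(v+X) = cv+X.\<close>
definition iso_quot :: "('k::division_ring \<Rightarrow> 'v::ab_group_add \<Rightarrow> 'v) \<Rightarrow> 'v set \<Rightarrow> bool" where
  "iso_quot sm X \<longleftrightarrow>
     (\<exists>f. bij_betw f X (range (coset X)) \<and>
          (\<forall>x\<in>X. \<forall>y\<in>X. \<forall>v w. f x = coset X v \<and> f y = coset X w \<longrightarrow> f (x + y) = coset X (v + w)) \<and>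
          (\<forall>c. \<forall>x\<in>X. \<forall>v. f x = coset X v \<longrightarrow> f (sm c x) = coset X (sm c v)))"

text \<open>For subspaces X \<subseteq> Y: dim(Y/X) = 1, i.e. Y/X has a basis consisting of one vector
  (the class of some v \<in> Y - X spans Y/X).\<close>
definition quot_dim1 :: "('k::division_ring \<Rightarrow> 'v::ab_group_add \<Rightarrow> 'v) \<Rightarrow> 'v set \<Rightarrow> 'v set \<Rightarrow> bool" where
  "quot_dim1 sm Y X \<longleftrightarrow> X \<subseteq> Y \<and> (\<exists>v\<in>Y. v \<notin> X \<and> (\<forall>w\<in>Y. \<exists>c. w - sm c v \<in> X))"

text \<open>dim V > 2: V is not spanned by two vectors.\<close>
definition dim_gt2 :: "('k::division_ring \<Rightarrow> 'v::ab_group_add \<Rightarrow> 'v) \<Rightarrow> bool" where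
  "dim_gt2 sm \<longleftrightarrow> \<not> (\<exists>a b. \<forall>v. \<exists>c d. v = sm c a + sm d b)"

definition Gr :: "('k::division_ring \<Rightarrow> 'v::ab_group_add \<Rightarrow> 'v) \<Rightarrow> 'v set set" where
  "Gr sm = {X. subspace sm X \<and> iso_quot sm X}"

definition adjacent :: "('k::division_ring \<Rightarrow> 'v::ab_group_add \<Rightarrow> 'v) \<Rightarrow> 'v set \<Rightarrow> 'v set \<Rightarrow> bool" where
  "adjacent sm X Y \<longleftrightarrow> quot_dim1 sm (ssum X Y) X \<and> quot_dim1 sm (ssum X Y) Y"

definition adj_clique :: "('k::division_ring \<Rightarrow> 'v::ab_group_add \<Rightarrow> 'v) \<Rightarrow> 'v set set \<Rightarrow> bool" where
  "adj_clique sm C \<longleftrightarrow> C \<subseteq> Gr sm \<and> (\<forall>X\<in>C. \<forall>Y\<in>C. X \<noteq> Y \<longrightarrow> adjacent sm X Y)"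

definition max_adj_clique :: "('k::division_ring \<Rightarrow> 'v::ab_group_add \<Rightarrow> 'v) \<Rightarrow> 'v set set \<Rightarrow> bool" where
  "max_adj_clique sm C \<longleftrightarrow> adj_clique sm C \<and> (\<forall>D. adj_clique sm D \<and> C \<subseteq> D \<longrightarrow> D = C)"

definition pencil_set :: "('k::division_ring \<Rightarrow> 'v::ab_group_add \<Rightarrow> 'v) \<Rightarrow> 'v set \<Rightarrow> 'v set \<Rightarrow> 'v set set" where
  "pencil_set sm M N = {X \<in> Gr sm. M \<subset> X \<and> X \<subset> N}"

definition is_pencil :: "('k::division_ring \<Rightarrow> 'v::ab_group_add \<Rightarrow> 'v) \<Rightarrow> 'v set set \<Rightarrow> bool" where
  "is_pencil sm P \<longleftrightarrow>
     (\<exists>M N. subspace sm M \<and> subspace sm N \<and>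
        (\<exists>X\<in>Gr sm. M \<subseteq> X \<and> X \<subseteq> N \<and> quot_dim1 sm X M \<and> quot_dim1 sm N X) \<and>
        P = pencil_set sm M N)"

end

theory Submission
  imports Defs
begin


locale lvs =
  fixes sm :: "'k::division_ring \<Rightarrow> 'v::ab_group_add \<Rightarrow> 'v" (infixr "\<cdot>" 75)
  assumes lvs: "left_vs sm"
begin

lemma sm_addr: "c \<cdot> (v + w) = c \<cdot> v + c \<cdot> w" using lvs by (simp add: left_vs_def)
lemma sm_addl: "(c + d) \<cdot> v = c \<cdot> v + d \<cdot> v" using lvs by (simp add: left_vs_def)
lemma sm_mult: "(c * d) \<cdot> v = c \<cdot> (d \<cdot> v)" using lvs by (simp add: left_vs_def)
lemma sm_one[simp]: "1 \<cdot> v = v" using lvs by (simp add: left_vs_def)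

lemma sm_zr[simp]: "c \<cdot> 0 = 0"
proof -
  have "c \<cdot> 0 = c \<cdot> 0 + c \<cdot> 0" by (metis add.right_neutral sm_addr)
  thus ?thesis by simp
qed
lemma sm_zl[simp]: "0 \<cdot> v = 0"
proof -
  have "0 \<cdot> v = 0 \<cdot> v + 0 \<cdot> v" by (metis add.right_neutral sm_addl)
  thus ?thesis by simp
qed
lemma sm_negr: "c \<cdot> (- v) = - (c \<cdot> v)"
  by (metis add.right_inverse add_eq_0_iff sm_addr sm_zr)
lemma sm_negl: "(- c) \<cdot> v = - (c \<cdot> v)"
  by (metis add.right_inverse add_eq_0_iff sm_addl sm_zl)
lemma sm_diffr: "c \<cdot> (v - w) = c \<cdot> v - c \<cdot> w"
  by (metis diff_conv_add_uminus sm_addr sm_negr)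
lemma sm_diffl: "(c - d) \<cdot> v = c \<cdot> v - d \<cdot> v"
  by (metis diff_conv_add_uminus sm_addl sm_negl)
lemma sm_eq0: "c \<cdot> v = 0 \<Longrightarrow> c \<noteq> 0 \<Longrightarrow> v = 0"
  by (metis left_inverse sm_mult sm_one sm_zr)
lemma sm_inv: "c \<noteq> 0 \<Longrightarrow> inverse c \<cdot> (c \<cdot> v) = v"
  by (metis left_inverse sm_mult sm_one)

abbreviation "sub \<equiv> subspace sm"
abbreviation "qd1 \<equiv> quot_dim1 sm"

lemma sub_0: "sub X \<Longrightarrow> 0 \<in> X" by (simp add: subspace_def)
lemma sub_add: "sub X \<Longrightarrow> x \<in> X \<Longrightarrow> y \<in> X \<Longrightarrow> x + y \<in> X" by (simp add: subspace_def)
lemma sub_sm: "sub X \<Longrightarrow> x \<in> X \<Longrightarrow> c \<cdot> x \<in> X" by (simp add: subspace_def)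
lemma sub_neg: "sub X \<Longrightarrow> x \<in> X \<Longrightarrow> - x \<in> X"
  by (metis sm_negl sm_one sub_sm)
lemma sub_diff: "sub X \<Longrightarrow> x \<in> X \<Longrightarrow> y \<in> X \<Longrightarrow> x - y \<in> X"
  by (metis diff_conv_add_uminus sub_add sub_neg)
lemma sub_diff_iff: "sub X \<Longrightarrow> y \<in> X \<Longrightarrow> (x - y \<in> X) = (x \<in> X)"
  by (metis diff_add_cancel sub_add sub_diff)
lemma sub_add_iff: "sub X \<Longrightarrow> y \<in> X \<Longrightarrow> (x + y \<in> X) = (x \<in> X)"
  by (metis add_diff_cancel sub_add sub_diff)
lemma sub_int: "sub X \<Longrightarrow> sub Y \<Longrightarrow> sub (X \<inter> Y)"
  by (simp add: subspace_def)
lemma sub_UNIV: "sub UNIV" by (simp add: subspace_def)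

lemma sub_ssum: assumes sX: "sub X" and sY: "sub Y" shows "sub (ssum X Y)"
  unfolding subspace_def
proof (intro conjI ballI allI)
  show "0 \<in> ssum X Y" unfolding ssum_def using sub_0[OF sX] sub_0[OF sY] by force
next
  fix a b assume "a \<in> ssum X Y" "b \<in> ssum X Y"
  then obtain x y x' y' where "a = x + y" "b = x' + y'" "x \<in> X" "y \<in> Y" "x' \<in> X" "y' \<in> Y"
    unfolding ssum_def by blast
  hence "a + b = (x + x') + (y + y')" "x + x' \<in> X" "y + y' \<in> Y"
    by (auto simp: algebra_simps intro: sub_add sX sY)
  thus "a + b \<in> ssum X Y" unfolding ssum_def by blast
next
  fix c a assume "a \<in> ssum X Y"
  then obtain x y where "a = x + y" "x \<in> X" "y \<in> Y" unfolding ssum_def by blast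
  hence "c \<cdot> a = c \<cdot> x + c \<cdot> y" "c \<cdot> x \<in> X" "c \<cdot> y \<in> Y"
    by (auto simp: sm_addr intro: sub_sm sX sY)
  thus "c \<cdot> a \<in> ssum X Y" unfolding ssum_def by blast
qed
lemma ssum_comm: "ssum X Y = ssum Y X"
  unfolding ssum_def by (metis (no_types, lifting) add.commute)
lemma ssum_l: "sub Y \<Longrightarrow> X \<subseteq> ssum X Y"
  unfolding ssum_def by (force dest: sub_0)
lemma ssum_r: "sub X \<Longrightarrow> Y \<subseteq> ssum X Y"
  unfolding ssum_def by (force dest: sub_0)
lemma ssum_le: "sub Z \<Longrightarrow> X \<subseteq> Z \<Longrightarrow> Y \<subseteq> Z \<Longrightarrow> ssum X Y \<subseteq> Z"
  unfolding ssum_def by (auto intro: sub_add)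
lemma ssum_mono: "X \<subseteq> X' \<Longrightarrow> Y \<subseteq> Y' \<Longrightarrow> ssum X Y \<subseteq> ssum X' Y'"
  unfolding ssum_def by blast

end


context lvs
begin

lemma qd1_sub: "qd1 Y X \<Longrightarrow> X \<subseteq> Y" by (simp add: quot_dim1_def)
lemma qd1_strict: "qd1 Y X \<Longrightarrow> X \<noteq> Y" by (auto simp: quot_dim1_def)
lemma qd1_I: "X \<subseteq> Y \<Longrightarrow> v \<in> Y \<Longrightarrow> v \<notin> X \<Longrightarrow> (\<And>w. w \<in> Y \<Longrightarrow> \<exists>c. w - c \<cdot> v \<in> X) \<Longrightarrow> qd1 Y X"
  by (auto simp: quot_dim1_def)

lemma qd1_D:
  assumes q: "qd1 Y X" and sX: "sub X" and v: "v \<in> Y" "v \<notin> X" and w: "w \<in> Y"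
  shows "\<exists>c. w - c \<cdot> v \<in> X"
proof -
  obtain v0 where v0: "v0 \<in> Y" "v0 \<notin> X" "\<forall>w\<in>Y. \<exists>c. w - c \<cdot> v0 \<in> X"
    using q by (auto simp: quot_dim1_def)
  obtain a where a: "v - a \<cdot> v0 \<in> X" using v0 v by blast
  obtain b where b: "w - b \<cdot> v0 \<in> X" using v0 w by blast
  have a0: "a \<noteq> 0" using a v by auto
  have e: "w - (b * inverse a) \<cdot> v = (w - b \<cdot> v0) - (b * inverse a) \<cdot> (v - a \<cdot> v0)"
    using a0 by (simp add: sm_diffr sm_mult[symmetric] mult.assoc)
  have "w - (b * inverse a) \<cdot> v \<in> X" unfolding e
    by (intro sub_diff sX b sub_sm a)
  thus ?thesis by blast
qed

lemma squeeze:
  assumes q: "qd1 B A" and sA: "sub A" and "A \<subseteq> C" "C \<subseteq> B" "C \<noteq> A" and sC: "sub C"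
  shows "C = B"
proof -
  obtain c0 where c0: "c0 \<in> C" "c0 \<notin> A" using assms by blast
  have "B \<subseteq> C"
  proof
    fix w assume "w \<in> B"
    then obtain c where "w - c \<cdot> c0 \<in> A" using qd1_D[OF q sA, of c0 w] c0 assms by blast
    hence "w - c \<cdot> c0 \<in> C" using assms by blast
    thus "w \<in> C" using sub_diff_iff[OF sC] c0 sub_sm[OF sC] by blast
  qed
  thus ?thesis using assms by blast
qed

lemma squeeze':
  assumes q: "qd1 B A" and sA: "sub A" and "A \<subseteq> C" "C \<subseteq> B" "C \<noteq> B" and sC: "sub C"
  shows "C = A"
  using squeeze[OF q sA] assms by blast

definition ext :: "'v set \<Rightarrow> 'v \<Rightarrow> 'v set" where
  "ext M v = {m + c \<cdot> v | m c. m \<in> M}"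

lemma ext_sub: assumes "sub M" shows "sub (ext M v)"
  unfolding subspace_def ext_def
proof (intro conjI ballI allI)
  show "0 \<in> {m + c \<cdot> v |m c. m \<in> M}" using sub_0[OF assms] by (metis (mono_tags, lifting) add_0 mem_Collect_eq sm_zl)
next
  fix x y assume "x \<in> {m + c \<cdot> v |m c. m \<in> M}" "y \<in> {m + c \<cdot> v |m c. m \<in> M}"
  then obtain m c m' c' where "x = m + c \<cdot> v" "y = m' + c' \<cdot> v" "m \<in> M" "m' \<in> M" by blast
  hence "x + y = (m + m') + (c + c') \<cdot> v" "m + m' \<in> M" by (auto simp: sm_addl algebra_simps intro: sub_add assms)
  thus "x + y \<in> {m + c \<cdot> v |m c. m \<in> M}" by blast
next
  fix d x assume "x \<in> {m + c \<cdot> v |m c. m \<in> M}"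
  then obtain m c where "x = m + c \<cdot> v" "m \<in> M" by blast
  hence "d \<cdot> x = d \<cdot> m + (d * c) \<cdot> v" "d \<cdot> m \<in> M" by (auto simp: sm_addr sm_mult intro: sub_sm assms)
  thus "d \<cdot> x \<in> {m + c \<cdot> v |m c. m \<in> M}" by blast
qed

lemma ext_ge: "M \<subseteq> ext M v"
proof
  fix m assume "m \<in> M"
  moreover have "m = m + 0 \<cdot> v" by simp
  ultimately show "m \<in> ext M v" unfolding ext_def by blast
qed
lemma ext_v: "sub M \<Longrightarrow> v \<in> ext M v"
proof -
  assume "sub M"
  hence "0 \<in> M" by (rule sub_0)
  moreover have "v = 0 + 1 \<cdot> v" by simp
  ultimately show "v \<in> ext M v" unfolding ext_def by blast
qed
lemma ext_qd1: assumes "sub M" "v \<notin> M" shows "qd1 (ext M v) M"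
proof (rule qd1_I[OF ext_ge ext_v[OF assms(1)] assms(2)])
  fix w assume "w \<in> ext M v"
  then obtain m c where "w = m + c \<cdot> v" "m \<in> M" unfolding ext_def by blast
  thus "\<exists>c. w - c \<cdot> v \<in> M" by (intro exI[of _ c]) simp
qed

lemma int_lemma:
  assumes q: "qd1 (ssum X Y) Y" and sX: "sub X" and sY: "sub Y"
  shows "qd1 X (X \<inter> Y)"
proof -
  obtain v where v: "v \<in> ssum X Y" "v \<notin> Y" "\<forall>w\<in>ssum X Y. \<exists>c. w - c \<cdot> v \<in> Y"
    using q by (auto simp: quot_dim1_def)
  obtain x y where xy: "v = x + y" "x \<in> X" "y \<in> Y" using v unfolding ssum_def by blast
  have xY: "x \<notin> Y" using xy v sub_add[OF sY] by blast
  show ?thesis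
  proof (rule qd1_I)
    show "X \<inter> Y \<subseteq> X" by blast
    show "x \<in> X" "x \<notin> X \<inter> Y" using xy xY by auto
    fix w assume w: "w \<in> X"
    hence "w \<in> ssum X Y" using ssum_l[OF sY] by blast
    then obtain c where c: "w - c \<cdot> v \<in> Y" using v by blast
    have e: "w - c \<cdot> x = (w - c \<cdot> v) + c \<cdot> y" using xy by (simp add: sm_addr algebra_simps)
    have "(w - c \<cdot> v) + c \<cdot> y \<in> Y" by (intro sub_add[OF sY] c sub_sm[OF sY] xy(3))
    hence "w - c \<cdot> x \<in> Y" by (subst e)
    moreover have "w - c \<cdot> x \<in> X" using w xy sub_diff[OF sX] sub_sm[OF sX] by blast
    ultimately show "\<exists>c. w - c \<cdot> x \<in> X \<inter> Y" by blast
  qed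
qed

lemma adj_sym: "adjacent sm X Y = adjacent sm Y X"
  unfolding adjacent_def by (metis ssum_comm)

lemma adj_int1: "adjacent sm X Y \<Longrightarrow> sub X \<Longrightarrow> sub Y \<Longrightarrow> qd1 X (X \<inter> Y)"
  unfolding adjacent_def using int_lemma by blast
lemma adj_int2: "adjacent sm X Y \<Longrightarrow> sub X \<Longrightarrow> sub Y \<Longrightarrow> qd1 Y (X \<inter> Y)"
  using adj_int1[of Y X] adj_sym by (metis inf_commute)
lemma adj_nsub: "adjacent sm X Y \<Longrightarrow> sub X \<Longrightarrow> \<not> Y \<subseteq> X"
  unfolding adjacent_def using ssum_le[of X X Y] qd1_strict ssum_l qd1_sub by blast
lemma adj_nsub2: "adjacent sm X Y \<Longrightarrow> sub Y \<Longrightarrow> \<not> X \<subseteq> Y"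
  using adj_nsub adj_sym by blast
lemma adj_q1: "adjacent sm X Y \<Longrightarrow> qd1 (ssum X Y) X" unfolding adjacent_def by blast
lemma adj_q2: "adjacent sm X Y \<Longrightarrow> qd1 (ssum X Y) Y" unfolding adjacent_def by blast

end


context lvs
begin

definition S :: "'v set \<Rightarrow> 'v set set" where "S M = {X \<in> Gr sm. qd1 X M}"
definition T :: "'v set \<Rightarrow> 'v set set" where "T N = {X \<in> Gr sm. qd1 N X}"

lemma Gr_sub: "X \<in> Gr sm \<Longrightarrow> sub X" by (simp add: Gr_def)

lemma S_half:
  assumes sM: "sub M" and X: "sub X" "qd1 X M" and Y: "sub Y" "qd1 Y M" and ne: "X \<noteq> Y"
  shows "qd1 (ssum X Y) X"
proof -
  have "\<not> Y \<subseteq> X"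
  proof
    assume "Y \<subseteq> X"
    hence "Y = X" using squeeze[OF X(2) sM _ _ _ Y(1)] qd1_sub[OF Y(2)] qd1_strict[OF Y(2)] by blast
    thus False using ne by simp
  qed
  then obtain y where y: "y \<in> Y" "y \<notin> X" by blast
  have yM: "y \<notin> M" using y qd1_sub[OF X(2)] by blast
  show ?thesis
  proof (rule qd1_I[OF ssum_l[OF Y(1)]])
    show "y \<in> ssum X Y" using y ssum_r[OF X(1)] by blast
    show "y \<notin> X" by fact
    fix w assume "w \<in> ssum X Y"
    then obtain a b where ab: "w = a + b" "a \<in> X" "b \<in> Y" unfolding ssum_def by blast
    obtain c where c: "b - c \<cdot> y \<in> M" using qd1_D[OF Y(2) sM y(1) yM ab(3)] by blast
    have "w - c \<cdot> y = a + (b - c \<cdot> y)" using ab by simp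
    also have "\<dots> \<in> X" using c qd1_sub[OF X(2)] ab sub_add[OF X(1)] by blast
    finally show "\<exists>c. w - c \<cdot> y \<in> X" by blast
  qed
qed

lemma S_clique: assumes sM: "sub M" shows "adj_clique sm (S M)"
  unfolding adj_clique_def
proof (intro conjI ballI impI)
  show "S M \<subseteq> Gr sm" unfolding S_def by blast
  fix X Y assume "X \<in> S M" "Y \<in> S M" "X \<noteq> Y"
  hence X: "sub X" "qd1 X M" and Y: "sub Y" "qd1 Y M" unfolding S_def using Gr_sub by auto
  show "adjacent sm X Y" unfolding adjacent_def
    using S_half[OF sM X Y \<open>X \<noteq> Y\<close>] S_half[OF sM Y X] \<open>X \<noteq> Y\<close> ssum_comm by metis
qed

lemma T_sum:
  assumes sN: "sub N" and X: "sub X" "qd1 N X" and Y: "sub Y" "qd1 N Y" and ne: "X \<noteq> Y"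
  shows "ssum X Y = N"
proof -
  have "\<not> Y \<subseteq> X"
  proof
    assume "Y \<subseteq> X"
    hence "X = N" using squeeze[OF Y(2) Y(1) _ qd1_sub[OF X(2)] _ X(1)] ne by blast
    thus False using qd1_strict[OF X(2)] by simp
  qed
  hence "ssum X Y \<noteq> X" using ssum_r[OF X(1), of Y] by blast
  thus ?thesis using squeeze[OF X(2) X(1) ssum_l[OF Y(1)] ssum_le[OF sN qd1_sub[OF X(2)] qd1_sub[OF Y(2)]]
      _ sub_ssum[OF X(1) Y(1)]] by blast
qed

lemma T_clique: assumes sN: "sub N" shows "adj_clique sm (T N)"
  unfolding adj_clique_def
proof (intro conjI ballI impI)
  show "T N \<subseteq> Gr sm" unfolding T_def by blast
  fix X Y assume "X \<in> T N" "Y \<in> T N" "X \<noteq> Y"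
  hence X: "sub X" "qd1 N X" and Y: "sub Y" "qd1 N Y" unfolding T_def using Gr_sub by auto
  show "adjacent sm X Y" unfolding adjacent_def
    using T_sum[OF sN X Y \<open>X \<noteq> Y\<close>] X Y by simp
qed

lemma ST_pencil:
  assumes sM: "sub M" and sN: "sub N" and X0: "X0 \<in> Gr sm" "qd1 X0 M" "qd1 N X0"
  shows "S M \<inter> T N = pencil_set sm M N"
proof
  show "S M \<inter> T N \<subseteq> pencil_set sm M N"
  proof
    fix X assume "X \<in> S M \<inter> T N"
    hence "X \<in> Gr sm" "qd1 X M" "qd1 N X" unfolding S_def T_def by auto
    thus "X \<in> pencil_set sm M N" unfolding pencil_set_def
      using qd1_sub[of X M] qd1_strict[of X M] qd1_sub[of N X] qd1_strict[of N X] by auto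
  qed
next
  have sX0: "sub X0" using X0 Gr_sub by blast
  show "pencil_set sm M N \<subseteq> S M \<inter> T N"
  proof
    fix Z assume "Z \<in> pencil_set sm M N"
    hence Z: "Z \<in> Gr sm" "M \<subset> Z" "Z \<subset> N" unfolding pencil_set_def by auto
    have sZ: "sub Z" using Z Gr_sub by blast
    show "Z \<in> S M \<inter> T N"
    proof (cases "Z \<subseteq> X0")
      case True
      have "M \<subseteq> Z" "Z \<noteq> M" using Z by auto
      hence "Z = X0" using squeeze[OF X0(2) sM _ True _ sZ] by simp
      thus ?thesis using X0 unfolding S_def T_def by blast
    next
      case False
      then obtain x where x: "x \<in> Z" "x \<notin> X0" by blast
      have xN: "x \<in> N" using x Z by blast
      have ZX0: "Z \<inter> X0 = M"
      proof (rule ccontr)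
        assume "Z \<inter> X0 \<noteq> M"
        moreover have "M \<subseteq> Z \<inter> X0" using Z qd1_sub[OF X0(2)] by auto
        ultimately have "Z \<inter> X0 = X0" using squeeze[OF X0(2) sM _ _ _ sub_int[OF sZ sX0]] by simp
        hence X0Z: "X0 \<subseteq> Z" by blast
        have "N \<subseteq> Z"
        proof
          fix w assume "w \<in> N"
          then obtain c where "w - c \<cdot> x \<in> X0" using qd1_D[OF X0(3) sX0 xN x(2)] by blast
          thus "w \<in> Z" using X0Z sub_diff_iff[OF sZ sub_sm[OF sZ x(1)]] by blast
        qed
        thus False using Z by blast
      qed
      have xM: "x \<notin> M" using x qd1_sub[OF X0(2)] by blast
      have qZ: "qd1 Z M"
      proof (rule qd1_I[OF _ x(1) xM])
        show "M \<subseteq> Z" using Z by blast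
        fix y assume y: "y \<in> Z"
        then obtain c where c: "y - c \<cdot> x \<in> X0" using qd1_D[OF X0(3) sX0 xN x(2)] Z by blast
        have "y - c \<cdot> x \<in> Z" using y x sub_diff[OF sZ] sub_sm[OF sZ] by blast
        thus "\<exists>c. y - c \<cdot> x \<in> M" using c ZX0 by blast
      qed
      obtain u0 where u0: "u0 \<in> X0" "u0 \<notin> M" using X0(2) qd1_sub qd1_strict by blast
      have u0Z: "u0 \<notin> Z" using u0 ZX0 by blast
      have qN: "qd1 N Z"
      proof (rule qd1_I[OF _ _ u0Z])
        show "Z \<subseteq> N" using Z by blast
        show "u0 \<in> N" using u0 qd1_sub[OF X0(3)] by blast
        fix w assume w: "w \<in> N"
        then obtain c where c: "w - c \<cdot> x \<in> X0" using qd1_D[OF X0(3) sX0 xN x(2)] by blast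
        then obtain d where d: "(w - c \<cdot> x) - d \<cdot> u0 \<in> M" using qd1_D[OF X0(2) sM u0] by blast
        have "w - d \<cdot> u0 = ((w - c \<cdot> x) - d \<cdot> u0) + c \<cdot> x" by simp
        also have "\<dots> \<in> Z" using d Z sub_add[OF sZ] sub_sm[OF sZ x(1)] by blast
        finally show "\<exists>d. w - d \<cdot> u0 \<in> Z" by blast
      qed
      show ?thesis using qZ qN Z unfolding S_def T_def by blast
    qed
  qed
qed

end


context lvs
begin

lemma tri':
  assumes sX: "sub X" and sY: "sub Y" and sZ: "sub Z"
    and xz: "adjacent sm X Z" and yz: "adjacent sm Y Z" and nz: "\<not> Z \<subseteq> ssum X Y"
  shows "Z \<inter> ssum X Y \<subseteq> X \<inter> Y"
proof -
  let ?N = "ssum X Y"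
  have sN: "sub ?N" using sub_ssum[OF sX sY] .
  have cX: "ssum X Z \<inter> ?N = X"
  proof (rule squeeze'[OF adj_q1[OF xz] sX])
    show "X \<subseteq> ssum X Z \<inter> ?N" using ssum_l[OF sZ] ssum_l[OF sY] by blast
    show "ssum X Z \<inter> ?N \<subseteq> ssum X Z" by blast
    show "ssum X Z \<inter> ?N \<noteq> ssum X Z" using nz ssum_r[OF sX, of Z] by blast
    show "sub (ssum X Z \<inter> ?N)" using sub_int[OF sub_ssum[OF sX sZ] sN] .
  qed
  have cY: "ssum Y Z \<inter> ?N = Y"
  proof (rule squeeze'[OF adj_q1[OF yz] sY])
    show "Y \<subseteq> ssum Y Z \<inter> ?N" using ssum_l[OF sZ] ssum_r[OF sX] by blast
    show "ssum Y Z \<inter> ?N \<subseteq> ssum Y Z" by blast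
    show "ssum Y Z \<inter> ?N \<noteq> ssum Y Z" using nz ssum_r[OF sY, of Z] by blast
    show "sub (ssum Y Z \<inter> ?N)" using sub_int[OF sub_ssum[OF sY sZ] sN] .
  qed
  show ?thesis using cX cY ssum_r[OF sX, of Z] ssum_r[OF sY, of Z] by blast
qed

lemma tri:
  assumes sX: "sub X" and sY: "sub Y" and sZ: "sub Z"
    and xz: "adjacent sm X Z" and yz: "adjacent sm Y Z" and nz: "\<not> Z \<subseteq> ssum X Y"
    and xy: "adjacent sm X Y"
  shows "X \<inter> Y \<subseteq> Z"
proof -
  have a: "Z \<inter> X \<subseteq> X \<inter> Y" using tri'[OF sX sY sZ xz yz nz] ssum_l[OF sY] by blast
  have q1: "qd1 X (X \<inter> Z)" using adj_int1[OF xz sX sZ] .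
  have "X \<inter> Y = X \<inter> Z"
  proof (rule squeeze'[OF q1 sub_int[OF sX sZ]])
    show "X \<inter> Z \<subseteq> X \<inter> Y" using a by blast
    show "X \<inter> Y \<subseteq> X" by blast
    show "sub (X \<inter> Y)" using sub_int[OF sX sY] .
    show "X \<inter> Y \<noteq> X" using adj_nsub2[OF xy sY] by blast
  qed
  thus ?thesis by blast
qed

lemma classify:
  assumes C: "adj_clique sm C" and X: "X \<in> C" and Y: "Y \<in> C" and ne: "X \<noteq> Y"
  shows "(\<forall>Z\<in>C. X \<inter> Y \<subseteq> Z) \<or> (\<forall>Z\<in>C. Z \<subseteq> ssum X Y)"
proof (rule ccontr)
  let ?M = "X \<inter> Y" and ?N = "ssum X Y"
  assume "\<not> ?thesis"
  then obtain Z1 Z2 where Z1: "Z1 \<in> C" "\<not> ?M \<subseteq> Z1" and Z2: "Z2 \<in> C" "\<not> Z2 \<subseteq> ?N" by blast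
  have CG: "\<And>Z. Z \<in> C \<Longrightarrow> sub Z" using C unfolding adj_clique_def using Gr_sub by blast
  have adj: "\<And>A B. A \<in> C \<Longrightarrow> B \<in> C \<Longrightarrow> A \<noteq> B \<Longrightarrow> adjacent sm A B"
    using C unfolding adj_clique_def by blast
  have sX: "sub X" and sY: "sub Y" and s1: "sub Z1" and s2: "sub Z2" using CG X Y Z1 Z2 by auto
  have sM: "sub ?M" using sub_int[OF sX sY] .
  have sN: "sub ?N" using sub_ssum[OF sX sY] .
  have xy: "adjacent sm X Y" using adj X Y ne by blast
  have XN: "X \<subseteq> ?N" using ssum_l[OF sY] .
  have YN: "Y \<subseteq> ?N" using ssum_r[OF sX] .
  have "Z2 \<noteq> X" "Z2 \<noteq> Y" using Z2 XN YN by auto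
  hence xz2: "adjacent sm X Z2" and yz2: "adjacent sm Y Z2" using adj X Y Z2 by auto
  have MZ2: "?M \<subseteq> Z2" using tri[OF sX sY s2 xz2 yz2 Z2(2) xy] .
  have Z2N: "Z2 \<inter> ?N \<subseteq> ?M" using tri'[OF sX sY s2 xz2 yz2 Z2(2)] .
  have "Z1 \<noteq> X" "Z1 \<noteq> Y" using Z1 by auto
  hence xz1: "adjacent sm X Z1" and yz1: "adjacent sm Y Z1" using adj X Y Z1 by auto
  have Z1N: "Z1 \<subseteq> ?N" using tri[OF sX sY s1 xz1 yz1 _ xy] Z1(2) by blast
  have "Z1 \<noteq> Z2" using Z1(2) MZ2 by blast
  hence z12: "adjacent sm Z1 Z2" using adj Z1 Z2 by blast
  have q12: "qd1 Z1 (Z1 \<inter> Z2)" using adj_int1[OF z12 s1 s2] .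
  have "?M \<inter> Z1 = Z1 \<inter> Z2"
  proof (rule squeeze'[OF q12 sub_int[OF s1 s2]])
    show "Z1 \<inter> Z2 \<subseteq> ?M \<inter> Z1" using Z2N Z1N by blast
    show "?M \<inter> Z1 \<subseteq> Z1" by blast
    show "?M \<inter> Z1 \<noteq> Z1" using adj_nsub[OF xz1 sX] by blast
    show "sub (?M \<inter> Z1)" using sub_int[OF sM s1] .
  qed
  hence qZ1: "qd1 Z1 (?M \<inter> Z1)" using q12 by simp
  have qNX: "qd1 ?N X" using adj_q1[OF xy] .
  have e1: "ssum X Z1 = ?N"
  proof (rule squeeze[OF qNX sX ssum_l[OF s1] ssum_le[OF sN XN Z1N] _ sub_ssum[OF sX s1]])
    show "ssum X Z1 \<noteq> X" using adj_nsub[OF xz1 sX] ssum_r[OF sX, of Z1] by blast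
  qed
  have qNZ1: "qd1 ?N Z1" using adj_q2[OF xz1] e1 by simp
  have MN: "?M \<subseteq> ?N" using XN by blast
  have e2: "ssum Z1 ?M = ?N"
  proof (rule squeeze[OF qNZ1 s1 ssum_l[OF sM] ssum_le[OF sN Z1N MN] _ sub_ssum[OF s1 sM]])
    show "ssum Z1 ?M \<noteq> Z1" using Z1(2) ssum_r[OF s1, of ?M] by blast
  qed
  obtain z where z: "z \<in> Z1" "z \<notin> ?M \<inter> Z1" using qZ1 unfolding quot_dim1_def by blast
  have zM: "z \<notin> ?M" using z by blast
  have qNM: "qd1 ?N ?M"
  proof (rule qd1_I[OF MN _ zM])
    show "z \<in> ?N" using z Z1N by blast
    fix w assume "w \<in> ?N"
    hence "w \<in> ssum Z1 ?M" using e2 by simp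
    then obtain a m where am: "w = a + m" "a \<in> Z1" "m \<in> ?M" unfolding ssum_def by blast
    obtain c where c: "a - c \<cdot> z \<in> ?M \<inter> Z1" using qd1_D[OF qZ1 sub_int[OF sM s1] z am(2)] by blast
    have e: "w - c \<cdot> z = (a - c \<cdot> z) + m" using am by (simp add: algebra_simps)
    have "(a - c \<cdot> z) + m \<in> ?M" using c am sub_add[OF sM] by blast
    hence "w - c \<cdot> z \<in> ?M" by (subst e)
    thus "\<exists>c. w - c \<cdot> z \<in> ?M" by blast
  qed
  have "X \<noteq> ?M" using adj_nsub2[OF xy sY] by blast
  hence "X = ?N" using squeeze[OF qNM sM _ XN _ sX] by blast
  thus False using qd1_strict[OF qNX] by simp
qed

lemma max_ST:
  assumes C: "max_adj_clique sm C" and X: "X \<in> C" and Y: "Y \<in> C" and ne: "X \<noteq> Y"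
  shows "C = S (X \<inter> Y) \<or> C = T (ssum X Y)"
proof -
  let ?M = "X \<inter> Y" and ?N = "ssum X Y"
  have C': "adj_clique sm C" using C unfolding max_adj_clique_def by blast
  have CG: "\<And>Z. Z \<in> C \<Longrightarrow> sub Z" "C \<subseteq> Gr sm" using C' unfolding adj_clique_def using Gr_sub by blast+
  have adj: "\<And>A B. A \<in> C \<Longrightarrow> B \<in> C \<Longrightarrow> A \<noteq> B \<Longrightarrow> adjacent sm A B"
    using C' unfolding adj_clique_def by blast
  have sX: "sub X" and sY: "sub Y" using CG X Y by auto
  have sM: "sub ?M" using sub_int[OF sX sY] .
  have sN: "sub ?N" using sub_ssum[OF sX sY] .
  have xy: "adjacent sm X Y" using adj X Y ne by blast
  have qXM: "qd1 X ?M" using adj_int1[OF xy sX sY] .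
  have qNX: "qd1 ?N X" using adj_q1[OF xy] .
  consider "\<forall>Z\<in>C. ?M \<subseteq> Z" | "\<forall>Z\<in>C. Z \<subseteq> ?N" using classify[OF C' X Y ne] by blast
  thus ?thesis
  proof cases
    case 1
    have "C \<subseteq> S ?M"
    proof
      fix Z assume Z: "Z \<in> C"
      have sZ: "sub Z" using CG Z by blast
      have "qd1 Z ?M"
      proof (cases "Z = X")
        case True thus ?thesis using qXM by simp
      next
        case False
        hence xz: "adjacent sm X Z" using adj X Z by blast
        have "X \<inter> Z = ?M"
        proof (rule ccontr)
          assume "X \<inter> Z \<noteq> ?M"
          hence "X \<inter> Z = X" using squeeze[OF qXM sM _ _ _ sub_int[OF sX sZ]] 1 Z by blast
          thus False using adj_nsub2[OF xz sZ] by blast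
        qed
        thus ?thesis using adj_int2[OF xz sX sZ] by simp
      qed
      thus "Z \<in> S ?M" unfolding S_def using CG Z by blast
    qed
    hence "S ?M = C" using C S_clique[OF sM] unfolding max_adj_clique_def by blast
    thus ?thesis by simp
  next
    case 2
    have "C \<subseteq> T ?N"
    proof
      fix Z assume Z: "Z \<in> C"
      have sZ: "sub Z" using CG Z by blast
      have "qd1 ?N Z"
      proof (cases "Z = X")
        case True thus ?thesis using qNX by simp
      next
        case False
        hence xz: "adjacent sm X Z" using adj X Z by blast
        have "ssum X Z = ?N"
        proof (rule squeeze[OF qNX sX ssum_l[OF sZ] ssum_le[OF sN ssum_l[OF sY]] _ sub_ssum[OF sX sZ]])
          show "Z \<subseteq> ?N" using 2 Z by blast
          show "ssum X Z \<noteq> X" using adj_nsub[OF xz sX] ssum_r[OF sX, of Z] by blast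
        qed
        thus ?thesis using adj_q2[OF xz] by simp
      qed
      thus "Z \<in> T ?N" unfolding T_def using CG Z by blast
    qed
    hence "T ?N = C" using C T_clique[OF sN] unfolding max_adj_clique_def by blast
    thus ?thesis by simp
  qed
qed

end


context lvs
begin

definition GP :: "'v set \<Rightarrow> ('v \<Rightarrow> 'v) \<Rightarrow> bool" where
  "GP X g \<longleftrightarrow> (\<forall>x\<in>X. \<forall>y\<in>X. g (x + y) - (g x + g y) \<in> X) \<and>
     (\<forall>c. \<forall>x\<in>X. g (c \<cdot> x) - c \<cdot> g x \<in> X) \<and> (\<forall>x\<in>X. g x \<in> X \<longrightarrow> x = 0) \<and>
     (\<forall>v. \<exists>x\<in>X. v - g x \<in> X)"

lemma coset_eq: assumes sX: "sub X" shows "coset X v = coset X w \<longleftrightarrow> v - w \<in> X"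
proof
  assume e: "coset X v = coset X w"
  have "v \<in> coset X v" unfolding coset_def using sub_0[OF sX] by (metis (mono_tags, lifting) add_0_right mem_Collect_eq)
  hence "v \<in> coset X w" using e by simp
  then obtain x where "v = w + x" "x \<in> X" unfolding coset_def by blast
  thus "v - w \<in> X" by simp
next
  assume d: "v - w \<in> X"
  have dd: "w - v \<in> X" using sub_neg[OF sX d] by simp
  show "coset X v = coset X w"
  proof
    show "coset X v \<subseteq> coset X w"
    proof
      fix u assume "u \<in> coset X v"
      then obtain x where x: "u = v + x" "x \<in> X" unfolding coset_def by blast
      have "u = w + ((v - w) + x)" using x by simp
      moreover have "(v - w) + x \<in> X" using sub_add[OF sX d x(2)] .
      ultimately show "u \<in> coset X w" unfolding coset_def by blast
    qed
    show "coset X w \<subseteq> coset X v"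
    proof
      fix u assume "u \<in> coset X w"
      then obtain x where x: "u = w + x" "x \<in> X" unfolding coset_def by blast
      have "u = v + ((w - v) + x)" using x by simp
      moreover have "(w - v) + x \<in> X" using sub_add[OF sX dd x(2)] .
      ultimately show "u \<in> coset X v" unfolding coset_def by blast
    qed
  qed
qed

lemma iso_GP: assumes sX: "sub X" shows "iso_quot sm X \<longleftrightarrow> (\<exists>g. GP X g)"
proof
  assume "iso_quot sm X"
  then obtain f where bij: "bij_betw f X (range (coset X))"
    and fa: "\<forall>x\<in>X. \<forall>y\<in>X. \<forall>v w. f x = coset X v \<and> f y = coset X w \<longrightarrow> f (x + y) = coset X (v + w)"
    and fh: "\<forall>c. \<forall>x\<in>X. \<forall>v. f x = coset X v \<longrightarrow> f (c \<cdot> x) = coset X (c \<cdot> v)"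
    unfolding iso_quot_def by blast
  define g where "g x = (SOME v. f x = coset X v)" for x
  have fg: "f x = coset X (g x)" if "x \<in> X" for x
  proof -
    have "f x \<in> range (coset X)" using bij_betw_apply[OF bij that] .
    hence "\<exists>v. f x = coset X v" by blast
    thus ?thesis unfolding g_def by (rule someI_ex)
  qed
  have "GP X g" unfolding GP_def
  proof (intro conjI ballI allI impI)
    fix x y assume x: "x \<in> X" and y: "y \<in> X"
    have "f (x + y) = coset X (g x + g y)" using fa x y fg by blast
    moreover have "f (x + y) = coset X (g (x + y))" using fg sub_add[OF sX x y] by blast
    ultimately show "g (x + y) - (g x + g y) \<in> X" using coset_eq[OF sX] by simp
  next
    fix c x assume x: "x \<in> X"
    have "f (c \<cdot> x) = coset X (c \<cdot> g x)" using fh x fg by blast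
    moreover have "f (c \<cdot> x) = coset X (g (c \<cdot> x))" using fg sub_sm[OF sX x] by blast
    ultimately show "g (c \<cdot> x) - c \<cdot> g x \<in> X" using coset_eq[OF sX] by simp
  next
    fix x assume x: "x \<in> X" and gx: "g x \<in> X"
    have "f (0 \<cdot> x) = coset X (0 \<cdot> g x)" using fh x fg by blast
    hence f0: "f 0 = coset X 0" by simp
    have "f x = coset X 0" using fg[OF x] coset_eq[OF sX, of "g x" 0] gx by simp
    hence "f x = f 0" using f0 by simp
    thus "x = 0" using bij x sub_0[OF sX] unfolding bij_betw_def inj_on_def by blast
  next
    fix v
    have "coset X v \<in> f ` X" using bij unfolding bij_betw_def by blast
    then obtain x where x: "x \<in> X" "coset X v = f x" by blast
    hence "coset X v = coset X (g x)" using fg by simp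
    thus "\<exists>x\<in>X. v - g x \<in> X" using x coset_eq[OF sX] by blast
  qed
  thus "\<exists>g. GP X g" by blast
next
  assume "\<exists>g. GP X g"
  then obtain g where ga: "\<forall>x\<in>X. \<forall>y\<in>X. g (x + y) - (g x + g y) \<in> X"
    and gh: "\<forall>c. \<forall>x\<in>X. g (c \<cdot> x) - c \<cdot> g x \<in> X"
    and gi: "\<forall>x\<in>X. g x \<in> X \<longrightarrow> x = 0" and gs: "\<forall>v. \<exists>x\<in>X. v - g x \<in> X"
    unfolding GP_def by blast
  define f where "f x = coset X (g x)" for x
  have inj: "inj_on f X"
  proof (rule inj_onI)
    fix x y assume x: "x \<in> X" and y: "y \<in> X" and e: "f x = f y"
    have d: "g x - g y \<in> X" using e coset_eq[OF sX] unfolding f_def by simp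
    have xy: "x - y \<in> X" using sub_diff[OF sX x y] .
    have a: "g x - (g (x - y) + g y) \<in> X" using ga xy y by (metis diff_add_cancel)
    have "g (x - y) = (g x - g y) - (g x - (g (x - y) + g y))" by (simp add: algebra_simps)
    also have "\<dots> \<in> X" using sub_diff[OF sX d a] .
    finally have "x - y = 0" using gi xy by blast
    thus "x = y" by simp
  qed
  have img: "f ` X = range (coset X)"
  proof
    show "f ` X \<subseteq> range (coset X)" unfolding f_def by blast
    show "range (coset X) \<subseteq> f ` X"
    proof
      fix u assume "u \<in> range (coset X)"
      then obtain v where u: "u = coset X v" by blast
      obtain x where x: "x \<in> X" "v - g x \<in> X" using gs by blast
      have "u = f x" using u x coset_eq[OF sX] unfolding f_def by simp
      thus "u \<in> f ` X" using x by blast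
    qed
  qed
  have "bij_betw f X (range (coset X))" using inj img unfolding bij_betw_def by blast
  moreover have "\<forall>x\<in>X. \<forall>y\<in>X. \<forall>v w. f x = coset X v \<and> f y = coset X w \<longrightarrow> f (x + y) = coset X (v + w)"
  proof (intro ballI allI impI)
    fix x y v w assume x: "x \<in> X" and y: "y \<in> X" and e: "f x = coset X v \<and> f y = coset X w"
    have d1: "g x - v \<in> X" and d2: "g y - w \<in> X" using e coset_eq[OF sX] unfolding f_def by auto
    have "g (x + y) - (v + w) = (g (x + y) - (g x + g y)) + ((g x - v) + (g y - w))"
      by (simp add: algebra_simps)
    also have "\<dots> \<in> X" using ga x y d1 d2 sub_add[OF sX] by blast
    finally show "f (x + y) = coset X (v + w)" unfolding f_def using coset_eq[OF sX] by simp
  qed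
  moreover have "\<forall>c. \<forall>x\<in>X. \<forall>v. f x = coset X v \<longrightarrow> f (c \<cdot> x) = coset X (c \<cdot> v)"
  proof (intro ballI allI impI)
    fix c x v assume x: "x \<in> X" and e: "f x = coset X v"
    have d: "g x - v \<in> X" using e coset_eq[OF sX] unfolding f_def by auto
    have "g (c \<cdot> x) - c \<cdot> v = (g (c \<cdot> x) - c \<cdot> g x) + c \<cdot> (g x - v)"
      by (simp add: sm_diffr)
    also have "\<dots> \<in> X" using gh x sub_sm[OF sX d] sub_add[OF sX] by blast
    finally show "f (c \<cdot> x) = coset X (c \<cdot> v)" unfolding f_def using coset_eq[OF sX] by simp
  qed
  ultimately show "iso_quot sm X" unfolding iso_quot_def by blast
qed

lemma Gr_GP: "X \<in> Gr sm \<longleftrightarrow> sub X \<and> (\<exists>g. GP X g)"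
  unfolding Gr_def using iso_GP by blast

end


context lvs
begin

lemma GP_diff: assumes g: "GP X g" and sX: "sub X" and x: "x \<in> X" and y: "y \<in> X"
  shows "g (x - y) - (g x - g y) \<in> X"
proof -
  have xy: "x - y \<in> X" using sub_diff[OF sX x y] .
  have a: "g x - (g (x - y) + g y) \<in> X" using g xy y unfolding GP_def by (metis diff_add_cancel)
  have "g (x - y) - (g x - g y) = - (g x - (g (x - y) + g y))" by (simp add: algebra_simps)
  also have "\<dots> \<in> X" using sub_neg[OF sX a] .
  finally show ?thesis .
qed

lemma small1: assumes d: "dim_gt2 sm" and X: "X \<in> Gr sm" and q: "qd1 X {0}" shows False
proof -
  have sX: "sub X" using Gr_sub X by blast
  obtain g where g: "GP X g" using X Gr_GP by blast
  obtain x0 where x0: "x0 \<in> X" "\<forall>w\<in>X. \<exists>c. w - c \<cdot> x0 \<in> {0}" using q unfolding quot_dim1_def by blast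
  have "\<forall>v. \<exists>c d. v = c \<cdot> (g x0) + d \<cdot> x0"
  proof
    fix v
    obtain x where x: "x \<in> X" "v - g x \<in> X" using g unfolding GP_def by blast
    obtain c where c: "x = c \<cdot> x0" using x0 x by auto
    have h: "g (c \<cdot> x0) - c \<cdot> g x0 \<in> X" using g x0 unfolding GP_def by blast
    have "v - c \<cdot> g x0 = (v - g x) + (g (c \<cdot> x0) - c \<cdot> g x0)" using c by simp
    also have "\<dots> \<in> X" using sub_add[OF sX x(2) h] .
    finally obtain d where "v - c \<cdot> g x0 - d \<cdot> x0 = 0" using x0 by blast
    hence "v = c \<cdot> (g x0) + d \<cdot> x0" by (simp add: algebra_simps)
    thus "\<exists>c d. v = c \<cdot> (g x0) + d \<cdot> x0" by blast
  qed
  thus False using d unfolding dim_gt2_def by blast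
qed

lemma small2: assumes d: "dim_gt2 sm" and X: "X \<in> Gr sm" and q: "qd1 UNIV X" shows False
proof -
  have sX: "sub X" using Gr_sub X by blast
  obtain g where g: "GP X g" using X Gr_GP by blast
  obtain n where n: "n \<notin> X" "\<forall>w. \<exists>c. w - c \<cdot> n \<in> X" using q unfolding quot_dim1_def by blast
  obtain z where z: "z \<in> X" "n - g z \<in> X" using g unfolding GP_def by blast
  have Xz: "\<exists>c. x = c \<cdot> z" if x: "x \<in> X" for x
  proof -
    obtain c where c: "g x - c \<cdot> n \<in> X" using n by blast
    have cz: "c \<cdot> z \<in> X" using sub_sm[OF sX z(1)] .
    have h1: "g (x - c \<cdot> z) - (g x - g (c \<cdot> z)) \<in> X" using GP_diff[OF g sX x cz] .
    have h2: "g (c \<cdot> z) - c \<cdot> g z \<in> X" using g z unfolding GP_def by blast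
    have h3: "c \<cdot> (n - g z) \<in> X" using sub_sm[OF sX z(2)] .
    have "g (x - c \<cdot> z) = (g (x - c \<cdot> z) - (g x - g (c \<cdot> z))) + (g x - c \<cdot> n) - (g (c \<cdot> z) - c \<cdot> g z) + c \<cdot> (n - g z)"
      by (simp add: sm_diffr algebra_simps)
    also have "\<dots> \<in> X" using h1 h2 h3 c sub_add[OF sX] sub_diff[OF sX] by metis
    finally have "x - c \<cdot> z = 0" using g sub_diff[OF sX x cz] unfolding GP_def by blast
    thus ?thesis by (intro exI[of _ c]) simp
  qed
  have "\<forall>v. \<exists>c d. v = c \<cdot> n + d \<cdot> z"
  proof
    fix v
    obtain c where c: "v - c \<cdot> n \<in> X" using n by blast
    then obtain d where "v - c \<cdot> n = d \<cdot> z" using Xz by blast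
    hence "v = c \<cdot> n + d \<cdot> z" by (simp add: algebra_simps)
    thus "\<exists>c d. v = c \<cdot> n + d \<cdot> z" by blast
  qed
  thus False using d unfolding dim_gt2_def by blast
qed

lemma additive_diff: assumes "\<And>a b. f (a + b) = f a + f b" shows "f (a - b) = f a - f (b::'v) - (0::'v) + 0"
proof -
  have "f a = f ((a - b) + b)" by simp
  also have "\<dots> = f (a - b) + f b" using assms .
  finally show ?thesis by (simp add: algebra_simps)
qed

lemma auto_Gr:
  assumes X: "X \<in> Gr sm" and sX': "sub X'"
    and pa: "\<And>a b. \<phi> (a + b) = \<phi> a + \<phi> b" and ph: "\<And>c a. \<phi> (c \<cdot> a) = c \<cdot> \<phi> a"
    and qa: "\<And>a b. \<psi> (a + b) = \<psi> a + \<psi> b" and qh: "\<And>c a. \<psi> (c \<cdot> a) = c \<cdot> \<psi> a"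
    and pq: "\<And>v. \<phi> (\<psi> v) = v" and qp: "\<And>v. \<psi> (\<phi> v) = v"
    and pX: "\<And>x. x \<in> X \<Longrightarrow> \<phi> x \<in> X'" and qX: "\<And>x. x \<in> X' \<Longrightarrow> \<psi> x \<in> X"
  shows "X' \<in> Gr sm"
proof -
  have sX: "sub X" using Gr_sub X by blast
  obtain g where g: "GP X g" using X Gr_GP by blast
  have pd: "\<phi> (a - b) = \<phi> a - \<phi> b" for a b using additive_diff[of \<phi>, OF pa] by simp
  have p0: "\<phi> 0 = 0" using pd[of 0 0] by simp
  define g' where "g' x = \<phi> (g (\<psi> x))" for x
  have "GP X' g'" unfolding GP_def
  proof (intro conjI ballI allI impI)
    fix x y assume x: "x \<in> X'" and y: "y \<in> X'"
    have "g' (x + y) - (g' x + g' y) = \<phi> (g (\<psi> x + \<psi> y) - (g (\<psi> x) + g (\<psi> y)))"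
      unfolding g'_def by (simp add: qa pd pa)
    also have "\<dots> \<in> X'" using pX g qX x y unfolding GP_def by blast
    finally show "g' (x + y) - (g' x + g' y) \<in> X'" .
  next
    fix c x assume x: "x \<in> X'"
    have "g' (c \<cdot> x) - c \<cdot> g' x = \<phi> (g (c \<cdot> \<psi> x) - c \<cdot> g (\<psi> x))"
      unfolding g'_def by (simp add: qh pd ph)
    also have "\<dots> \<in> X'" using pX g qX x unfolding GP_def by blast
    finally show "g' (c \<cdot> x) - c \<cdot> g' x \<in> X'" .
  next
    fix x assume x: "x \<in> X'" and gx: "g' x \<in> X'"
    have "\<psi> (g' x) = g (\<psi> x)" unfolding g'_def using qp by simp
    hence "g (\<psi> x) \<in> X" using qX[OF gx] by simp
    hence "\<psi> x = 0" using g qX[OF x] unfolding GP_def by blast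
    hence "\<phi> (\<psi> x) = 0" using p0 by simp
    thus "x = 0" using pq by simp
  next
    fix v
    obtain x where x: "x \<in> X" "\<psi> v - g x \<in> X" using g unfolding GP_def by blast
    have "v - g' (\<phi> x) = \<phi> (\<psi> v - g x)" unfolding g'_def using qp pq pd by simp
    also have "\<dots> \<in> X'" using pX[OF x(2)] .
    finally show "\<exists>x\<in>X'. v - g' x \<in> X'" using pX[OF x(1)] by blast
  qed
  thus ?thesis using Gr_GP sX' by blast
qed

end


context lvs
begin

lemma ext_le: assumes sU: "sub U" "M \<subseteq> U" "y \<in> U" shows "ext M y \<subseteq> U"
  unfolding ext_def using assms sub_add sub_sm by blast

lemma HYP:
  assumes sA: "sub A" and sU: "sub U" and AU: "A \<subseteq> U" and w: "w \<in> U" "w \<notin> A"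
  shows "\<exists>H. sub H \<and> A \<subseteq> H \<and> H \<subseteq> U \<and> w \<notin> H \<and> qd1 U H"
proof -
  define F where "F = {H. sub H \<and> A \<subseteq> H \<and> H \<subseteq> U \<and> w \<notin> H}"
  have "\<forall>C\<in>chains F. \<exists>U'\<in>F. \<forall>X\<in>C. X \<subseteq> U'"
  proof
    fix C assume C: "C \<in> chains F"
    hence CF: "C \<subseteq> F" and ch: "\<forall>H1\<in>C. \<forall>H2\<in>C. H1 \<subseteq> H2 \<or> H2 \<subseteq> H1"
      unfolding chains_def chain_subset_def by auto
    show "\<exists>U'\<in>F. \<forall>X\<in>C. X \<subseteq> U'"
    proof (cases "C = {}")
      case True
      have "A \<in> F" unfolding F_def using sA AU w by blast
      thus ?thesis using True by blast
    next
      case False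
      then obtain H0 where H0: "H0 \<in> C" by blast
      have sub: "sub (\<Union>C)" unfolding subspace_def
      proof (intro conjI ballI allI)
        show "0 \<in> \<Union>C" using H0 CF sub_0 unfolding F_def by blast
      next
        fix x y assume "x \<in> \<Union>C" "y \<in> \<Union>C"
        then obtain H1 H2 where h: "H1 \<in> C" "H2 \<in> C" "x \<in> H1" "y \<in> H2" by blast
        show "x + y \<in> \<Union>C"
        proof (cases "H1 \<subseteq> H2")
          case True
          hence "x + y \<in> H2" using h CF sub_add unfolding F_def by blast
          thus ?thesis using h by blast
        next
          case False
          hence "H2 \<subseteq> H1" using ch h by blast
          hence "x + y \<in> H1" using h CF sub_add unfolding F_def by blast
          thus ?thesis using h by blast
        qed
      next
        fix c x assume "x \<in> \<Union>C"
        then obtain H1 where h: "H1 \<in> C" "x \<in> H1" by blast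
        hence "c \<cdot> x \<in> H1" using CF sub_sm unfolding F_def by blast
        thus "c \<cdot> x \<in> \<Union>C" using h by blast
      qed
      have "\<Union>C \<in> F" unfolding F_def using sub H0 CF unfolding F_def by blast
      thus ?thesis by blast
    qed
  qed
  then obtain H where H: "H \<in> F" and mx: "\<forall>X\<in>F. H \<subseteq> X \<longrightarrow> X = H" using Zorn_Lemma2[of F] by blast
  have sH: "sub H" and AH: "A \<subseteq> H" and HU: "H \<subseteq> U" and wH: "w \<notin> H" using H unfolding F_def by auto
  have "qd1 U H"
  proof (rule qd1_I[OF HU w(1) wH])
    fix y assume y: "y \<in> U"
    show "\<exists>c. y - c \<cdot> w \<in> H"
    proof (cases "y \<in> H")
      case True thus ?thesis by (intro exI[of _ 0]) simp
    next
      case False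
      have "ext H y \<noteq> H" using False ext_v[OF sH] by blast
      moreover have "H \<subseteq> ext H y" by (rule ext_ge)
      ultimately have "ext H y \<notin> F" using mx by blast
      moreover have "sub (ext H y)" "A \<subseteq> ext H y" "ext H y \<subseteq> U"
        using ext_sub[OF sH] AH ext_ge[of H y] ext_le[OF sU HU y] by auto
      ultimately have "w \<in> ext H y" unfolding F_def by blast
      then obtain h c where hc: "w = h + c \<cdot> y" "h \<in> H" unfolding ext_def by blast
      have c0: "c \<noteq> 0" using hc wH by auto
      have "y - inverse c \<cdot> w = - (inverse c \<cdot> h)"
        using hc c0 by (simp add: sm_addr sm_mult[symmetric] algebra_simps)
      also have "\<dots> \<in> H" using sub_neg[OF sH sub_sm[OF sH hc(2)]] .
      finally show ?thesis by blast
    qed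
  qed
  thus ?thesis using sH AH HU wH by blast
qed

end


context lvs
begin

lemma CL:
  assumes X: "X \<in> Gr sm" and sM: "sub M" and sX': "sub X'" and q: "qd1 X M" and q': "qd1 X' M"
  shows "X' \<in> Gr sm"
proof (cases "X' = X")
  case True thus ?thesis using X by simp
next
  case False
  have sX: "sub X" using Gr_sub X by blast
  obtain u where u: "u \<in> X" "u \<notin> M" using q unfolding quot_dim1_def by blast
  obtain u' where u': "u' \<in> X'" "u' \<notin> M" using q' unfolding quot_dim1_def by blast
  have MX: "M \<subseteq> X" and MX': "M \<subseteq> X'" using q q' qd1_sub by auto
  have u'X: "u' \<notin> X"
  proof
    assume u'X: "u' \<in> X"
    have "X' \<subseteq> X"
    proof
      fix w assume w: "w \<in> X'"
      then obtain c where c: "w - c \<cdot> u' \<in> M" using qd1_D[OF q' sM u'] by blast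
      have "w = (w - c \<cdot> u') + c \<cdot> u'" by simp
      also have "\<dots> \<in> X" using c MX sub_add[OF sX] sub_sm[OF sX u'X] by blast
      finally show "w \<in> X" .
    qed
    moreover have "X' \<noteq> M" using qd1_strict[OF q'] by simp
    ultimately have "X' = X" using squeeze[OF q sM MX' _ _ sX'] by blast
    thus False using False by simp
  qed
  define d where "d = u' - u"
  have dM: "d \<notin> M"
  proof
    assume "d \<in> M"
    hence "d + u \<in> X" using MX sub_add[OF sX _ u(1)] by blast
    thus False using u'X unfolding d_def by simp
  qed
  define A where "A = ext M d"
  have sA: "sub A" unfolding A_def using ext_sub[OF sM] .
  have uA: "u \<notin> A"
  proof
    assume "u \<in> A"
    then obtain m c where mc: "u = m + c \<cdot> d" "m \<in> M" unfolding A_def ext_def by blast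
    show False
    proof (cases "c = 0")
      case True thus False using mc u by simp
    next
      case False
      have "c \<cdot> u' = (u + c \<cdot> u) - m" using mc unfolding d_def by (simp add: sm_diffr algebra_simps)
      also have "\<dots> \<in> X" using sub_diff[OF sX sub_add[OF sX u(1) sub_sm[OF sX u(1)]]] mc MX by blast
      finally have "inverse c \<cdot> (c \<cdot> u') \<in> X" using sub_sm[OF sX] by blast
      thus False using sm_inv[OF False] u'X by simp
    qed
  qed
  obtain H where H: "sub H" "A \<subseteq> H" "u \<notin> H" "qd1 UNIV H"
    using HYP[OF sA sub_UNIV _ _ uA] by blast
  have MH: "M \<subseteq> H" using H(2) ext_ge unfolding A_def by blast
  have dH: "d \<in> H" using H(2) ext_v[OF sM] unfolding A_def by blast
  define lam where "lam v = (SOME c. v - c \<cdot> u \<in> H)" for v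
  have lspec: "v - lam v \<cdot> u \<in> H" for v
  proof -
    have "\<exists>c. v - c \<cdot> u \<in> H" using qd1_D[OF H(4) H(1), of u v] H(3) by blast
    thus ?thesis unfolding lam_def by (rule someI_ex)
  qed
  have luniq: "lam v = c" if "v - c \<cdot> u \<in> H" for v c
  proof (rule ccontr)
    assume ne: "lam v \<noteq> c"
    have e: "(v - c \<cdot> u) - (v - lam v \<cdot> u) = (lam v - c) \<cdot> u" by (simp add: sm_diffl)
    have "(v - c \<cdot> u) - (v - lam v \<cdot> u) \<in> H" using sub_diff[OF H(1) that lspec[of v]] .
    hence "(lam v - c) \<cdot> u \<in> H" by (simp only: e)
    hence "inverse (lam v - c) \<cdot> ((lam v - c) \<cdot> u) \<in> H" using sub_sm[OF H(1)] by blast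
    thus False using sm_inv[of "lam v - c" u] ne H(3) by simp
  qed
  have ladd: "lam (v + w) = lam v + lam w" for v w
  proof (rule luniq)
    have e: "(v + w) - (lam v + lam w) \<cdot> u = (v - lam v \<cdot> u) + (w - lam w \<cdot> u)" by (simp add: sm_addl)
    have "(v - lam v \<cdot> u) + (w - lam w \<cdot> u) \<in> H" using sub_add[OF H(1) lspec[of v] lspec[of w]] .
    thus "(v + w) - (lam v + lam w) \<cdot> u \<in> H" by (simp only: e)
  qed
  have lsm: "lam (c \<cdot> v) = c * lam v" for c v
  proof (rule luniq)
    have e: "c \<cdot> v - (c * lam v) \<cdot> u = c \<cdot> (v - lam v \<cdot> u)" by (simp add: sm_diffr sm_mult)
    have "c \<cdot> (v - lam v \<cdot> u) \<in> H" using sub_sm[OF H(1) lspec[of v]] .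
    thus "c \<cdot> v - (c * lam v) \<cdot> u \<in> H" by (simp only: e)
  qed
  have ld: "lam d = 0" using luniq[of d 0] dH by simp
  have lcd: "lam (c \<cdot> d) = 0" for c using lsm ld by simp
  define \<phi> where "\<phi> v = v + lam v \<cdot> d" for v
  define \<psi> where "\<psi> v = v - lam v \<cdot> d" for v
  have lphi: "lam (\<phi> v) = lam v" for v unfolding \<phi>_def using ladd lcd by simp
  have lpsi: "lam (\<psi> v) = lam v" for v
  proof -
    have "lam v = lam (\<psi> v + lam v \<cdot> d)" unfolding \<psi>_def by simp
    also have "\<dots> = lam (\<psi> v)" using ladd lcd by simp
    finally show ?thesis by simp
  qed
  show ?thesis
  proof (rule auto_Gr[OF X sX', of \<phi> \<psi>])
    show "\<phi> (a + b) = \<phi> a + \<phi> b" for a b unfolding \<phi>_def by (simp add: ladd sm_addl algebra_simps)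
    show "\<phi> (c \<cdot> a) = c \<cdot> \<phi> a" for c a unfolding \<phi>_def by (simp add: lsm sm_mult sm_addr)
    show "\<psi> (a + b) = \<psi> a + \<psi> b" for a b unfolding \<psi>_def by (simp add: ladd sm_addl algebra_simps)
    show "\<psi> (c \<cdot> a) = c \<cdot> \<psi> a" for c a unfolding \<psi>_def by (simp add: lsm sm_mult sm_diffr)
    show "\<phi> (\<psi> v) = v" for v using lpsi unfolding \<phi>_def by (simp add: \<psi>_def)
    show "\<psi> (\<phi> v) = v" for v using lphi unfolding \<psi>_def by (simp add: \<phi>_def)
  next
    fix x assume x: "x \<in> X"
    then obtain a where a: "x - a \<cdot> u \<in> M" using qd1_D[OF q sM u(1) u(2)] by blast
    have "lam x = a" using luniq a MH by blast
    hence "\<phi> x = (x - a \<cdot> u) + a \<cdot> u'" unfolding \<phi>_def d_def by (simp add: sm_diffr algebra_simps)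
    also have "\<dots> \<in> X'" using a MX' sub_add[OF sX'] sub_sm[OF sX' u'(1)] by blast
    finally show "\<phi> x \<in> X'" .
  next
    fix x assume x: "x \<in> X'"
    then obtain a where a: "x - a \<cdot> u' \<in> M" using qd1_D[OF q' sM u'(1) u'(2)] by blast
    have "x - a \<cdot> u = (x - a \<cdot> u') + a \<cdot> d" unfolding d_def by (simp add: sm_diffr algebra_simps)
    also have "\<dots> \<in> H" using a MH dH sub_add[OF H(1)] sub_sm[OF H(1)] by blast
    finally have "lam x = a" using luniq by blast
    hence "\<psi> x = (x - a \<cdot> u') + a \<cdot> u" unfolding \<psi>_def d_def by (simp add: sm_diffr algebra_simps)
    also have "\<dots> \<in> X" using a MX sub_add[OF sX] sub_sm[OF sX u(1)] by blast
    finally show "\<psi> x \<in> X" .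
  qed
qed

end


context lvs
begin

lemma sub_zero: "sub {0}" unfolding subspace_def by simp

lemma S_max:
  assumes d: "dim_gt2 sm" and sM: "sub M" and X0: "X0 \<in> Gr sm" "qd1 X0 M"
  shows "max_adj_clique sm (S M)"
  unfolding max_adj_clique_def
proof (intro conjI allI impI)
  show "adj_clique sm (S M)" using S_clique[OF sM] .
  fix D assume DD: "adj_clique sm D \<and> S M \<subseteq> D"
  hence Dc: "adj_clique sm D" and SD: "S M \<subseteq> D" by auto
  have adj: "\<And>A B. A \<in> D \<Longrightarrow> B \<in> D \<Longrightarrow> A \<noteq> B \<Longrightarrow> adjacent sm A B"
    using Dc unfolding adj_clique_def by blast
  have DG: "D \<subseteq> Gr sm" using Dc unfolding adj_clique_def by blast
  have sX0: "sub X0" using X0 Gr_sub by blast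
  have X0S: "X0 \<in> S M" unfolding S_def using X0 by blast
  have "D \<subseteq> S M"
  proof
    fix Z assume Z: "Z \<in> D"
    show "Z \<in> S M"
    proof (rule ccontr)
      assume ZS: "Z \<notin> S M"
      have ZG: "Z \<in> Gr sm" using DG Z by blast
      have sZ: "sub Z" using ZG Gr_sub by blast
      have "Z \<noteq> X0" using ZS X0S by blast
      hence zx: "adjacent sm Z X0" using adj Z X0S SD by blast
      show False
      proof (cases "M \<subseteq> Z")
        case True
        have "Z \<inter> X0 = M"
        proof (rule ccontr)
          assume "Z \<inter> X0 \<noteq> M"
          moreover have "M \<subseteq> Z \<inter> X0" using True qd1_sub[OF X0(2)] by blast
          ultimately have "Z \<inter> X0 = X0" using squeeze[OF X0(2) sM _ _ _ sub_int[OF sZ sX0]] by blast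
          thus False using adj_nsub[OF zx sZ] by blast
        qed
        hence "qd1 Z M" using adj_int1[OF zx sZ sX0] by simp
        thus False using ZS ZG unfolding S_def by blast
      next
        case False
        let ?N = "ssum Z M"
        have sN: "sub ?N" using sub_ssum[OF sZ sM] .
        have nz: "?N \<noteq> Z" using False ssum_r[OF sZ, of M] by blast
        have "?N = ssum Z X0"
          using squeeze[OF adj_q1[OF zx] sZ ssum_l[OF sM] ssum_mono[OF order_refl qd1_sub[OF X0(2)]] nz sN] .
        hence qN: "qd1 ?N Z" using adj_q1[OF zx] by simp
        have "?N \<noteq> UNIV" using small2[OF d ZG] qN by metis
        then obtain v where v: "v \<notin> ?N" by blast
        have vM: "v \<notin> M" using v ssum_r[OF sZ, of M] by blast
        have qY: "qd1 (ext M v) M" using ext_qd1[OF sM vM] .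
        have YG: "ext M v \<in> Gr sm" using CL[OF X0(1) sM ext_sub[OF sM] X0(2) qY] .
        have YD: "ext M v \<in> D" using SD YG qY unfolding S_def by blast
        have vY: "v \<in> ext M v" using ext_v[OF sM] .
        have "ext M v \<noteq> Z" using v vY ssum_l[OF sM, of Z] by blast
        hence zy: "adjacent sm Z (ext M v)" using adj Z YD by blast
        have "?N = ssum Z (ext M v)"
          using squeeze[OF adj_q1[OF zy] sZ ssum_l[OF sM] ssum_mono[OF order_refl ext_ge] nz sN] .
        thus False using v vY ssum_r[OF sZ, of "ext M v"] by blast
      qed
    qed
  qed
  thus "D = S M" using SD by blast
qed

lemma T_max:
  assumes d: "dim_gt2 sm" and sN: "sub N" and X0: "X0 \<in> Gr sm" "qd1 N X0"
  shows "max_adj_clique sm (T N)"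
  unfolding max_adj_clique_def
proof (intro conjI allI impI)
  show "adj_clique sm (T N)" using T_clique[OF sN] .
  fix D assume DD: "adj_clique sm D \<and> T N \<subseteq> D"
  hence Dc: "adj_clique sm D" and SD: "T N \<subseteq> D" by auto
  have adj: "\<And>A B. A \<in> D \<Longrightarrow> B \<in> D \<Longrightarrow> A \<noteq> B \<Longrightarrow> adjacent sm A B"
    using Dc unfolding adj_clique_def by blast
  have DG: "D \<subseteq> Gr sm" using Dc unfolding adj_clique_def by blast
  have sX0: "sub X0" using X0 Gr_sub by blast
  have X0S: "X0 \<in> T N" unfolding T_def using X0 by blast
  have X0N: "X0 \<subseteq> N" using qd1_sub[OF X0(2)] .
  have "D \<subseteq> T N"
  proof
    fix Z assume Z: "Z \<in> D"
    show "Z \<in> T N"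
    proof (rule ccontr)
      assume ZS: "Z \<notin> T N"
      have ZG: "Z \<in> Gr sm" using DG Z by blast
      have sZ: "sub Z" using ZG Gr_sub by blast
      have "X0 \<noteq> Z" using ZS X0S by blast
      hence xz: "adjacent sm X0 Z" using adj Z X0S SD by blast
      show False
      proof (cases "Z \<subseteq> N")
        case True
        have "ssum X0 Z \<noteq> X0" using adj_nsub[OF xz sX0] ssum_r[OF sX0, of Z] by blast
        hence "ssum X0 Z = N"
          using squeeze[OF X0(2) sX0 ssum_l[OF sZ] ssum_le[OF sN X0N True] _ sub_ssum[OF sX0 sZ]] by blast
        hence "qd1 N Z" using adj_q2[OF xz] by simp
        thus False using ZS ZG unfolding T_def by blast
      next
        case False
        have qW: "qd1 X0 (X0 \<inter> Z)" using adj_int1[OF xz sX0 sZ] .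
        have "X0 \<inter> Z \<noteq> {0}" using small1[OF d X0(1)] qW by metis
        moreover have "0 \<in> X0 \<inter> Z" using sub_0[OF sX0] sub_0[OF sZ] by blast
        ultimately obtain w where w: "w \<in> X0 \<inter> Z" "w \<noteq> 0" by blast
        have wN: "w \<in> N" using w X0N by blast
        obtain H where H: "sub H" "H \<subseteq> N" "w \<notin> H" "qd1 N H"
          using HYP[OF sub_zero sN _ wN] w sub_0[OF sN] by blast
        have HX: "X0 \<noteq> H" using w H by blast
        have e: "ssum X0 H = N" using T_sum[OF sN sX0 X0(2) H(1) H(4) HX] .
        have q1: "qd1 X0 (X0 \<inter> H)" using int_lemma[OF _ sX0 H(1)] e H(4) by simp
        have q2: "qd1 H (X0 \<inter> H)" using int_lemma[OF _ H(1) sX0] e H(4) X0(2) ssum_comm[of H X0]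
          by (simp add: inf_commute)
        have HG: "H \<in> Gr sm" using CL[OF X0(1) sub_int[OF sX0 H(1)] H(1) q1 q2] .
        have HD: "H \<in> D" using SD HG H(4) unfolding T_def by blast
        have "H \<noteq> Z" using False H(2) by blast
        hence hz: "adjacent sm H Z" using adj HD Z by blast
        have qZ: "qd1 Z (H \<inter> Z)" using adj_int2[OF hz H(1) sZ] .
        have "Z \<inter> N = H \<inter> Z"
        proof (rule squeeze'[OF qZ sub_int[OF H(1) sZ]])
          show "H \<inter> Z \<subseteq> Z \<inter> N" using H(2) by blast
          show "Z \<inter> N \<subseteq> Z" by blast
          show "Z \<inter> N \<noteq> Z" using False by blast
          show "sub (Z \<inter> N)" using sub_int[OF sZ sN] .
        qed
        thus False using w wN H(3) by blast
      qed
    qed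
  qed
  thus "D = T N" using SD by blast
qed

end

theorem theorem2p5:
  fixes sm :: "'k::division_ring \<Rightarrow> 'v::ab_group_add \<Rightarrow> 'v"
  assumes "left_vs sm"
    and "dim_gt2 sm"
    and "Gr sm \<noteq> {}"
  shows "\<forall>P. is_pencil sm P \<longleftrightarrow>
           (P \<subseteq> Gr sm \<and> (\<exists>X\<in>P. \<exists>Y\<in>P. X \<noteq> Y) \<and>
            (\<exists>C1 C2. max_adj_clique sm C1 \<and> max_adj_clique sm C2 \<and> C1 \<noteq> C2 \<and> P = C1 \<inter> C2))"
proof
  interpret lvs sm by (rule lvs.intro, rule assms(1))
  have d: "dim_gt2 sm" by (rule assms(2))
  fix P
  show "is_pencil sm P \<longleftrightarrow>
           (P \<subseteq> Gr sm \<and> (\<exists>X\<in>P. \<exists>Y\<in>P. X \<noteq> Y) \<and>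
            (\<exists>C1 C2. max_adj_clique sm C1 \<and> max_adj_clique sm C2 \<and> C1 \<noteq> C2 \<and> P = C1 \<inter> C2))"
  proof
    assume "is_pencil sm P"
    then obtain M N X0 where sM: "sub M" and sN: "sub N" and X0: "X0 \<in> Gr sm" "qd1 X0 M" "qd1 N X0"
      and P: "P = pencil_set sm M N"
      unfolding is_pencil_def by blast
    have sX0: "sub X0" using X0 Gr_sub by blast
    have PST: "P = S M \<inter> T N" using ST_pencil[OF sM sN X0] P by simp
    have X0P: "X0 \<in> P" using PST X0 unfolding S_def T_def by blast
    obtain u0 where u0: "u0 \<in> X0" "u0 \<notin> M" using X0(2) unfolding quot_dim1_def by blast
    obtain n where n: "n \<in> N" "n \<notin> X0" using X0(3) unfolding quot_dim1_def by blast
    have MN: "M \<subseteq> N" using qd1_sub[OF X0(2)] qd1_sub[OF X0(3)] by blast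
    have X0N: "X0 \<subseteq> N" using qd1_sub[OF X0(3)] .
    define y where "y = u0 + n"
    have yX0: "y \<notin> X0"
    proof
      assume "y \<in> X0"
      hence "y - u0 \<in> X0" using sub_diff[OF sX0 _ u0(1)] by blast
      thus False using n unfolding y_def by simp
    qed
    have yM: "y \<notin> M" using yX0 qd1_sub[OF X0(2)] by blast
    have yN: "y \<in> N" unfolding y_def using sub_add[OF sN] u0 n X0N by blast
    let ?X1 = "ext M y"
    have q1: "qd1 ?X1 M" using ext_qd1[OF sM yM] .
    have X1G: "?X1 \<in> Gr sm" using CL[OF X0(1) sM ext_sub[OF sM] X0(2) q1] .
    have X1N: "?X1 \<subseteq> N" using ext_le[OF sN MN yN] .
    have nX1: "n \<notin> ?X1"
    proof
      assume "n \<in> ?X1"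
      then obtain m c where mc: "n = m + sm c y" "m \<in> M" unfolding ext_def by blast
      show False
      proof (cases "c = 1")
        case True
        hence "u0 = - m" using mc unfolding y_def by (simp add: sm_addr algebra_simps eq_neg_iff_add_eq_0)
        thus False using u0 sub_neg[OF sM mc(2)] by simp
      next
        case False
        hence c1: "1 - c \<noteq> 0" by simp
        have "sm (1 - c) n = m + sm c u0" using mc unfolding y_def
          by (simp add: sm_addr sm_diffl algebra_simps)
        also have "\<dots> \<in> X0" using mc u0 qd1_sub[OF X0(2)] sub_add[OF sX0] sub_sm[OF sX0] by blast
        finally have "sm (inverse (1 - c)) (sm (1 - c) n) \<in> X0" using sub_sm[OF sX0] by blast
        thus False using sm_inv[OF c1] n by simp
      qed
    qed
    have X1P: "?X1 \<in> P" unfolding P pencil_set_def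
      using X1G qd1_sub[OF q1] qd1_strict[OF q1] X1N nX1 n by blast
    have ne: "?X1 \<noteq> X0" using yX0 ext_v[OF sM] by blast
    have "N \<noteq> UNIV" using small2[OF d X0(1)] X0(3) by metis
    then obtain v where v: "v \<notin> N" by blast
    have vM: "v \<notin> M" using v MN by blast
    have qY: "qd1 (ext M v) M" using ext_qd1[OF sM vM] .
    have YG: "ext M v \<in> Gr sm" using CL[OF X0(1) sM ext_sub[OF sM] X0(2) qY] .
    have "ext M v \<in> S M" unfolding S_def using YG qY by blast
    moreover have "ext M v \<notin> T N" unfolding T_def using ext_v[OF sM, of v] v qd1_sub by blast
    ultimately have STne: "S M \<noteq> T N" by blast
    show "P \<subseteq> Gr sm \<and> (\<exists>X\<in>P. \<exists>Y\<in>P. X \<noteq> Y) \<and>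
          (\<exists>C1 C2. max_adj_clique sm C1 \<and> max_adj_clique sm C2 \<and> C1 \<noteq> C2 \<and> P = C1 \<inter> C2)"
    proof (intro conjI)
      show "P \<subseteq> Gr sm" unfolding P pencil_set_def by blast
      show "\<exists>X\<in>P. \<exists>Y\<in>P. X \<noteq> Y" using X0P X1P ne by blast
      show "\<exists>C1 C2. max_adj_clique sm C1 \<and> max_adj_clique sm C2 \<and> C1 \<noteq> C2 \<and> P = C1 \<inter> C2"
        using S_max[OF d sM X0(1,2)] T_max[OF d sN X0(1,3)] STne PST by blast
    qed
  next
    assume R: "P \<subseteq> Gr sm \<and> (\<exists>X\<in>P. \<exists>Y\<in>P. X \<noteq> Y) \<and>
            (\<exists>C1 C2. max_adj_clique sm C1 \<and> max_adj_clique sm C2 \<and> C1 \<noteq> C2 \<and> P = C1 \<inter> C2)"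
    then obtain X Y C1 C2 where XY: "X \<in> P" "Y \<in> P" "X \<noteq> Y" and C: "max_adj_clique sm C1"
      "max_adj_clique sm C2" "C1 \<noteq> C2" "P = C1 \<inter> C2" by blast
    let ?M = "X \<inter> Y" and ?N = "ssum X Y"
    have X1: "X \<in> C1" "Y \<in> C1" "X \<in> C2" "Y \<in> C2" using XY C by auto
    have h1: "C1 = S ?M \<or> C1 = T ?N" using max_ST[OF C(1) X1(1,2) XY(3)] .
    have h2: "C2 = S ?M \<or> C2 = T ?N" using max_ST[OF C(2) X1(3,4) XY(3)] .
    have PST: "P = S ?M \<inter> T ?N" using h1 h2 C(3,4) by blast
    have XG: "X \<in> Gr sm" using R XY by blast
    have YG: "Y \<in> Gr sm" using R XY by blast
    have sX: "sub X" and sY: "sub Y" using XG YG Gr_sub by auto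
    have xy: "adjacent sm X Y" using C(1) X1(1,2) XY(3) unfolding max_adj_clique_def adj_clique_def by blast
    have sM: "sub ?M" using sub_int[OF sX sY] .
    have sN: "sub ?N" using sub_ssum[OF sX sY] .
    have qXM: "qd1 X ?M" using adj_int1[OF xy sX sY] .
    have qNX: "qd1 ?N X" using adj_q1[OF xy] .
    show "is_pencil sm P" unfolding is_pencil_def
      using sM sN XG qXM qNX qd1_sub[OF qXM] qd1_sub[OF qNX] ST_pencil[OF sM sN XG qXM qNX] PST by blast
  qed
qed


end
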